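(* Consider the ODE system $$\frac{du}{dt}=\frac{a_1u}{1+fv}-b_1u^2-c_1uv,\qquad \frac{dv}{dt}=a_2v-b_2v^2-c_2uv,$$ with positive parameters $a_1,a_2,b_1,b_2,c_1,c_2$, and regard $f$ as the bifurcation parameter. Let $E_3=(0,v^* )$ with $v^*=\frac{a_2}{b_2}$, and let $$f^*=\frac{b_2(a_1b_2-a_2c_1)}{a_2^2c_1}.$$ If $$\frac{a_1f^*}{(1+f^*v^* )^2}+c_1-\frac{b_1b_2}{c_2}\neq0,$$ then the system undergoes a transcritical bifurcation around $E_3$ at $f=f^*$. *)

theory Defs
  imports "HOL-Analysis.Analysis"
begin

text \<open>Transcritical bifurcation of a planar parametrised vector field
  x' = F mu x  (x in R^2 represented as real * real, mu in R) at the equilibrium x0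
  for the parameter value mu0, in the sense of Sotomayor's theorem (Perko,
  Differential Equations and Dynamical Systems, Thm. 3.1.1 (ii)), which is the
  criterion used in the paper:
  the map (x,mu) |-> F mu x is C^2 near (x0,mu0); F mu0 x0 = 0;
  A = D_x F(x0,mu0) has a simple eigenvalue 0 (det A = 0) and its other
  eigenvalue is nonzero (trace A ~= 0); V spans ker A, W spans ker A^T;
  W . F_mu = 0, W . (D F_mu V) ~= 0, W . D^2F(V,V) ~= 0.\<close>

definition transcritical_bifurcation ::
  "(real \<Rightarrow> real \<times> real \<Rightarrow> real \<times> real) \<Rightarrow> real \<times> real \<Rightarrow> real \<Rightarrow> bool" where
  "transcritical_bifurcation F x0 \<mu>0 \<longleftrightarrow>
    (\<exists>S DP D2P V W.
       open S \<and> (x0, \<mu>0) \<in> S \<and>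
       (\<forall>z\<in>S. ((\<lambda>(x, \<mu>). F \<mu> x) has_derivative blinfun_apply (DP z)) (at z)) \<and>
       (\<forall>z\<in>S. (DP has_derivative blinfun_apply (D2P z)) (at z)) \<and>
       continuous_on S D2P \<and>
       (let z0 = (x0, \<mu>0);
            A = (\<lambda>v. DP z0 (v, 0));
            a11 = fst (A (1, 0)); a21 = snd (A (1, 0));
            a12 = fst (A (0, 1)); a22 = snd (A (0, 1));
            F\<mu> = DP z0 ((0, 0), 1);
            DF\<mu>V = D2P z0 ((0, 0), 1) (V, 0);
            D2FVV = D2P z0 (V, 0) (V, 0)
        in F \<mu>0 x0 = (0, 0) \<and>
           a11 * a22 - a12 * a21 = 0 \<and> a11 + a22 \<noteq> 0 \<and>
           V \<noteq> (0, 0) \<and> A V = (0, 0) \<and>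
           W \<noteq> (0, 0) \<and> (\<forall>v. inner W (A v) = 0) \<and>
           inner W F\<mu> = 0 \<and> inner W DF\<mu>V \<noteq> 0 \<and> inner W D2FVV \<noteq> 0))"

end

theory Submission
  imports Defs
begin

definition sc :: "'b::real_normed_vector \<Rightarrow> ('a::real_normed_vector \<Rightarrow>\<^sub>L real) \<Rightarrow> 'a \<Rightarrow>\<^sub>L 'b" where
  "sc B p = blinfun_scaleR_left B o\<^sub>L p"

lemma sc_apply[simp]: "blinfun_apply (sc B p) x = blinfun_apply p x *\<^sub>R B"
  by (simp add: sc_def)

definition p1 :: "((real \<times> real) \<times> real) \<Rightarrow>\<^sub>L real" where "p1 = Blinfun (\<lambda>h. fst (fst h))"
definition p2 :: "((real \<times> real) \<times> real) \<Rightarrow>\<^sub>L real" where "p2 = Blinfun (\<lambda>h. snd (fst h))"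
definition p3 :: "((real \<times> real) \<times> real) \<Rightarrow>\<^sub>L real" where "p3 = Blinfun (\<lambda>h. snd h)"

lemma p1_apply[simp]: "blinfun_apply p1 h = fst (fst h)"
  unfolding p1_def
  by (rule fun_cong[OF bounded_linear_Blinfun_apply[OF bounded_linear_compose[OF bounded_linear_fst bounded_linear_fst]]])
lemma p2_apply[simp]: "blinfun_apply p2 h = snd (fst h)"
  unfolding p2_def
  by (rule fun_cong[OF bounded_linear_Blinfun_apply[OF bounded_linear_compose[OF bounded_linear_snd bounded_linear_fst]]])
lemma p3_apply[simp]: "blinfun_apply p3 h = snd h"
  unfolding p3_def
  by (rule fun_cong[OF bounded_linear_Blinfun_apply[OF bounded_linear_snd]])

lemma term_deriv:
  fixes B :: "'b::real_normed_vector"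
  assumes "(g has_derivative (\<lambda>k. d1 * fst (fst k) + d2 * snd (fst k) + d3 * snd k)) (at z)"
  shows "((\<lambda>z. g z *\<^sub>R B) has_derivative
     blinfun_apply (d1 *\<^sub>R sc B p1 + d2 *\<^sub>R sc B p2 + d3 *\<^sub>R sc B p3)) (at z)"
  apply (rule has_derivative_eq_rhs)
   apply (rule derivative_eq_intros assms | simp)+
  apply (rule ext)
  apply (simp add: blinfun.add_left blinfun.scaleR_left scaleR_add_left)
  done

theorem mainTheorem12:
  fixes a1 a2 b1 b2 c1 c2 :: real
  assumes "a1 > 0" "a2 > 0" "b1 > 0" "b2 > 0" "c1 > 0" "c2 > 0"
  defines "vstar \<equiv> a2 / b2"
      and "fstar \<equiv> b2 * (a1 * b2 - a2 * c1) / (a2^2 * c1)"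
  assumes "a1 * fstar / (1 + fstar * vstar)^2 + c1 - b1 * b2 / c2 \<noteq> 0"
  shows "transcritical_bifurcation
           (\<lambda>f (u, v). (a1 * u / (1 + f * v) - b1 * u^2 - c1 * u * v,
                         a2 * v - b2 * v^2 - c2 * u * v))
           (0, vstar) fstar"
proof -
  define Dn :: "(real \<times> real) \<times> real \<Rightarrow> real" where "Dn z = 1 + snd z * snd (fst z)" for z
  define S where "S = {z. 0 < Dn z}"
  define e1 :: "real \<times> real" where "e1 = (1, 0)"
  define e2 :: "real \<times> real" where "e2 = (0, 1)"
  define g11 where "g11 (z::(real \<times> real) \<times> real) = a1 / Dn z - 2 * b1 * fst (fst z) - c1 * snd (fst z)" for z
  define g12 where "g12 (z::(real \<times> real) \<times> real) = - a1 * fst (fst z) * snd z / (Dn z)^2 - c1 * fst (fst z)" for z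
  define g13 where "g13 (z::(real \<times> real) \<times> real) = - a1 * fst (fst z) * snd (fst z) / (Dn z)^2" for z
  define g21 where "g21 (z::(real \<times> real) \<times> real) = - c2 * snd (fst z)" for z
  define g22 where "g22 (z::(real \<times> real) \<times> real) = a2 - 2 * b2 * snd (fst z) - c2 * fst (fst z)" for z
  define DP where "DP z = g11 z *\<^sub>R sc e1 p1 + g12 z *\<^sub>R sc e1 p2 + g13 z *\<^sub>R sc e1 p3
      + g21 z *\<^sub>R sc e2 p1 + g22 z *\<^sub>R sc e2 p2" for z
  define D2P where "D2P z =
     ((-2 * b1) *\<^sub>R sc (sc e1 p1) p1 + (- a1 * snd z / (Dn z)^2 - c1) *\<^sub>R sc (sc e1 p1) p2
        + (- a1 * snd (fst z) / (Dn z)^2) *\<^sub>R sc (sc e1 p1) p3)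
   + ((- a1 * snd z / (Dn z)^2 - c1) *\<^sub>R sc (sc e1 p2) p1
        + (2 * a1 * fst (fst z) * (snd z)^2 / (Dn z)^3) *\<^sub>R sc (sc e1 p2) p2
        + (- a1 * fst (fst z) * (1 - snd z * snd (fst z)) / (Dn z)^3) *\<^sub>R sc (sc e1 p2) p3)
   + ((- a1 * snd (fst z) / (Dn z)^2) *\<^sub>R sc (sc e1 p3) p1
        + (- a1 * fst (fst z) * (1 - snd z * snd (fst z)) / (Dn z)^3) *\<^sub>R sc (sc e1 p3) p2
        + (2 * a1 * fst (fst z) * (snd (fst z))^2 / (Dn z)^3) *\<^sub>R sc (sc e1 p3) p3)
   + (0 *\<^sub>R sc (sc e2 p1) p1 + (- c2) *\<^sub>R sc (sc e2 p1) p2 + 0 *\<^sub>R sc (sc e2 p1) p3)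
   + ((- c2) *\<^sub>R sc (sc e2 p2) p1 + (-2 * b2) *\<^sub>R sc (sc e2 p2) p2 + 0 *\<^sub>R sc (sc e2 p2) p3)" for z
  define z0 where "z0 = ((0::real, vstar), fstar)"
  have D0: "Dn z0 = a1 * b2 / (a2 * c1)"
    using assms(1-6) unfolding Dn_def z0_def fstar_def vstar_def
    by (simp add: field_simps power2_eq_square)
  have D0pos: "Dn z0 > 0" using D0 assms(1-6) by simp
  have key: "a1 / Dn z0 = c1 * vstar"
    using D0 D0pos assms(1-6) unfolding vstar_def by (simp add: field_simps)
  have openS: "open S"
    unfolding S_def Dn_def by (intro open_Collect_less continuous_intros)
  have z0S: "z0 \<in> S" using D0pos unfolding S_def by simp
  have dF: "((\<lambda>(x, \<mu>). (\<lambda>f (u, v). (a1 * u / (1 + f * v) - b1 * u^2 - c1 * u * v,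
                         a2 * v - b2 * v^2 - c2 * u * v)) \<mu> x) has_derivative blinfun_apply (DP z)) (at z)"
    if "z \<in> S" for z
  proof -
    have Dz: "Dn z > 0" using that unfolding S_def by simp
    have eq: "(\<lambda>(x, \<mu>). (\<lambda>f (u, v). (a1 * u / (1 + f * v) - b1 * u^2 - c1 * u * v,
                         a2 * v - b2 * v^2 - c2 * u * v)) \<mu> x) =
       (\<lambda>z. (a1 * fst (fst z) / (1 + snd z * snd (fst z)) - b1 * (fst (fst z))^2 - c1 * fst (fst z) * snd (fst z),
             a2 * snd (fst z) - b2 * (snd (fst z))^2 - c2 * fst (fst z) * snd (fst z)))"
      by (auto simp: fun_eq_iff split: prod.splits)
    have Dz': "1 + snd z * snd (fst z) \<noteq> 0" using Dz unfolding Dn_def by simp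
    show ?thesis
      unfolding eq
      apply (rule has_derivative_eq_rhs)
       apply (rule derivative_eq_intros | simp add: Dz')+
      apply (rule ext)
      using Dz
      apply (simp add: DP_def g11_def g12_def g13_def g21_def g22_def e1_def e2_def
          blinfun.add_left blinfun.diff_left blinfun.minus_left blinfun.scaleR_left Dn_def prod_eq_iff)
      apply (simp add: divide_simps power2_eq_square)
      apply (simp add: algebra_simps)
      done
  qed
  have dDP: "(DP has_derivative blinfun_apply (D2P z)) (at z)" if "z \<in> S" for z
  proof -
    have Dz: "Dn z > 0" using that unfolding S_def by simp
    have Dz': "1 + snd z * snd (fst z) \<noteq> 0" using Dz unfolding Dn_def by simp
    have h11: "(g11 has_derivative (\<lambda>k. (-2 * b1) * fst (fst k) + (- a1 * snd z / (Dn z)^2 - c1) * snd (fst k) + (- a1 * snd (fst z) / (Dn z)^2) * snd k)) (at z)"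
      unfolding g11_def[abs_def] Dn_def
      apply (rule has_derivative_eq_rhs)
       apply (rule derivative_eq_intros | simp add: Dz')+
      apply (rule ext)
      using Dz' apply (simp add: divide_simps power2_eq_square power3_eq_cube)
      apply (simp add: algebra_simps)
      done
    have h12: "(g12 has_derivative (\<lambda>k. (- a1 * snd z / (Dn z)^2 - c1) * fst (fst k) + (2 * a1 * fst (fst z) * (snd z)^2 / (Dn z)^3) * snd (fst k) + (- a1 * fst (fst z) * (1 - snd z * snd (fst z)) / (Dn z)^3) * snd k)) (at z)"
      unfolding g12_def[abs_def] Dn_def
      apply (rule has_derivative_eq_rhs)
       apply (rule derivative_eq_intros | simp add: Dz')+
      apply (rule ext)
      using Dz' apply (simp add: divide_simps power2_eq_square power3_eq_cube)
      apply (simp add: algebra_simps)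
      done
    have h13: "(g13 has_derivative (\<lambda>k. (- a1 * snd (fst z) / (Dn z)^2) * fst (fst k) + (- a1 * fst (fst z) * (1 - snd z * snd (fst z)) / (Dn z)^3) * snd (fst k) + (2 * a1 * fst (fst z) * (snd (fst z))^2 / (Dn z)^3) * snd k)) (at z)"
      unfolding g13_def[abs_def] Dn_def
      apply (rule has_derivative_eq_rhs)
       apply (rule derivative_eq_intros | simp add: Dz')+
      apply (rule ext)
      using Dz' apply (simp add: divide_simps power2_eq_square power3_eq_cube)
      apply (simp add: algebra_simps)
      done
    have h21: "(g21 has_derivative (\<lambda>k. (0) * fst (fst k) + (- c2) * snd (fst k) + (0) * snd k)) (at z)"
      unfolding g21_def[abs_def] Dn_def
      apply (rule has_derivative_eq_rhs)
       apply (rule derivative_eq_intros | simp add: Dz')+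
      done
    have h22: "(g22 has_derivative (\<lambda>k. (- c2) * fst (fst k) + (-2 * b2) * snd (fst k) + (0) * snd k)) (at z)"
      unfolding g22_def[abs_def] Dn_def
      apply (rule has_derivative_eq_rhs)
       apply (rule derivative_eq_intros | simp add: Dz')+
      apply (simp add: fun_eq_iff)
      done
    show ?thesis
      unfolding DP_def[abs_def]
      apply (rule has_derivative_eq_rhs)
       apply (rule has_derivative_add term_deriv h11 h12 h13 h21 h22)+
      apply (rule ext)
      apply (simp only: D2P_def blinfun.add_left)
      done
  qed
  have cont: "continuous_on S D2P"
    unfolding D2P_def[abs_def] Dn_def S_def by (auto intro!: continuous_intros)
  have vb: "b2 * vstar = a2" using assms(4) unfolding vstar_def by simp
  have Dfs: "Dn ((0, vstar), fstar) = 1 + fstar * vstar" unfolding Dn_def by simp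
  note key' = key[unfolded z0_def] and D0pos' = D0pos[unfolded z0_def]
  have last: "- (b2 * (c2 * (- (a1 * fstar / (Dn ((0, vstar), fstar))^2) - c1))) \<noteq> b1 * (b2 * b2)"
  proof
    assume eq: "- (b2 * (c2 * (- (a1 * fstar / (Dn ((0, vstar), fstar))^2) - c1))) = b1 * (b2 * b2)"
    have "b2 * c2 * (a1 * fstar / (1 + fstar * vstar)^2 + c1 - b1 * b2 / c2) = 0"
      using eq assms(6) unfolding Dfs by (simp add: algebra_simps)
    then show False using assms(4,6,9) by simp
  qed
  show ?thesis
    unfolding transcritical_bifurcation_def
    apply (rule exI[of _ S], rule exI[of _ DP], rule exI[of _ D2P], rule exI[of _ "(b2, - c2)"],
        rule exI[of _ "(1, 0)"])
    apply (intro conjI)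
    using openS apply simp
    using z0S apply (simp add: z0_def)
    using dF apply blast
    using dDP apply blast
    using cont apply simp
    unfolding Let_def
    apply (simp add: DP_def D2P_def g11_def g12_def g13_def g21_def g22_def e1_def e2_def
          blinfun.add_left blinfun.diff_left blinfun.minus_left blinfun.scaleR_left key' inner_Pair)
    using last D0pos' assms(1-6) unfolding vstar_def
    by (simp add: field_simps power2_eq_square)
qed

end
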